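(* Let $X\in\mathscr{C}^-$, $B\in\mathcal{H}$ and $x\in\mathscr{C}(X,B)$, and suppose there is a distinguished triangle $X\overset{x}{\to}B\to U\to X[1]$ with $U\in\mathcal{U}$. Let $z_X\colon X\to Z_X$ be obtained as follows: choose a distinguished triangle $V\to U'\overset{a}{\to}X\to V[1]$ with $U'\in\mathcal{U},V\in\mathcal{V}$; choose a distinguished triangle $T[-1]\to S[-1]\overset{b}{\to}U'\to T$ with $S\in\mathcal{S},T\in\mathcal{T}$; and choose a distinguished triangle $S[-1]\overset{a\circ b}{\to}X\overset{z_X}{\to}Z_X\to S$ (then $Z_X\in\mathcal{H}$). Then the unique morphism $\zeta\in\underline{\mathcal{H}}(Z_X,B)$ satisfying $\zeta\circ\underline{z}_X=\underline{x}$ in $\underline{\mathscr{C}}$ is an epimorphism in $\underline{\mathcal{H}}$.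
   Context: $\mathscr{C}$ is a triangulated category with shift $[1]$; subcategories are full, additive, closed under isomorphisms and direct summands. $\mathrm{Ext}^1(X,Y)=\mathscr{C}(X,Y[1])$. $\mathcal{M}\ast\mathcal{N}$ is the full subcategory of objects $C$ admitting a distinguished triangle $M\to C\to N\to M[1]$ with $M\in\mathcal{M}$, $N\in\mathcal{N}$. A cotorsion pair $(\mathcal{U},\mathcal{V})$: $\mathrm{Ext}^1(\mathcal{U},\mathcal{V})=0$ and $\mathscr{C}=\mathcal{U}\ast\mathcal{V}[1]$. Fix a twin cotorsion pair, i.e. cotorsion pairs $(\mathcal{S},\mathcal{T}),(\mathcal{U},\mathcal{V})$ with $\mathrm{Ext}^1(\mathcal{S},\mathcal{V})=0$. Put $\mathcal{W}=\mathcal{T}\cap\mathcal{U}$, $\mathscr{C}^-=\mathcal{S}[-1]\ast\mathcal{W}$, $\mathscr{C}^+=\mathcal{W}\ast\mathcal{V}[1]$, $\mathcal{H}=\mathscr{C}^+\cap\mathscr{C}^-$. $\underline{\mathscr{C}}$, $\underline{\mathcal{H}}$ are the ideal quotients of $\mathscr{C}$, $\mathcal{H}$ by morphisms factoring through objects of $\mathcal{W}$, and $\underline{f}$ is the image of $f$. (Existence and uniqueness of $\zeta$ hold since $-\circ\underline{z}_X\colon\underline{\mathscr{C}}(Z_X,Y)\to\underline{\mathscr{C}}(X,Y)$ is bijective for all $Y\in\mathscr{C}^+$.) *)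

theory Defs
  imports Main
begin

text \<open>A triangulated category presented concretely: a class of objects, hom-sets,
composition, identities, abelian-group structure on hom-sets, a shift functor
(an additive auto-equivalence) and a class of distinguished triangles
(X, Y, Z, f, g, h) standing for X --f--> Y --g--> Z --h--> X[1].\<close>

record ('o, 'm) tcat =
  Obj  :: "'o set"
  Hom  :: "'o \<Rightarrow> 'o \<Rightarrow> 'm set"
  Cmp  :: "'m \<Rightarrow> 'm \<Rightarrow> 'm"       (* Cmp g f = g \<circ> f *)
  Id   :: "'o \<Rightarrow> 'm"
  Add  :: "'m \<Rightarrow> 'm \<Rightarrow> 'm"
  Zero :: "'o \<Rightarrow> 'o \<Rightarrow> 'm"
  Neg  :: "'m \<Rightarrow> 'm"
  Sh   :: "'o \<Rightarrow> 'o"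
  ShM  :: "'m \<Rightarrow> 'm"
  Tri  :: "('o \<times> 'o \<times> 'o \<times> 'm \<times> 'm \<times> 'm) set"

definition is_iso :: "('o,'m) tcat \<Rightarrow> 'o \<Rightarrow> 'o \<Rightarrow> 'm \<Rightarrow> bool" where
  "is_iso C X Y f \<longleftrightarrow> f \<in> Hom C X Y \<and>
     (\<exists>g \<in> Hom C Y X. Cmp C g f = Id C X \<and> Cmp C f g = Id C Y)"

definition iso_ob :: "('o,'m) tcat \<Rightarrow> 'o \<Rightarrow> 'o \<Rightarrow> bool" where
  "iso_ob C X Y \<longleftrightarrow> (\<exists>f. is_iso C X Y f)"

definition zero_obj :: "('o,'m) tcat \<Rightarrow> 'o \<Rightarrow> bool" where
  "zero_obj C Oz \<longleftrightarrow> Oz \<in> Obj C \<and>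
     (\<forall>X \<in> Obj C. Hom C Oz X = {Zero C Oz X} \<and> Hom C X Oz = {Zero C X Oz})"

definition biprod :: "('o,'m) tcat \<Rightarrow> 'o \<Rightarrow> 'o \<Rightarrow> 'o \<Rightarrow> 'm \<Rightarrow> 'm \<Rightarrow> 'm \<Rightarrow> 'm \<Rightarrow> bool" where
  "biprod C X Y P i1 i2 p1 p2 \<longleftrightarrow>
     i1 \<in> Hom C X P \<and> i2 \<in> Hom C Y P \<and> p1 \<in> Hom C P X \<and> p2 \<in> Hom C P Y \<and>
     Cmp C p1 i1 = Id C X \<and> Cmp C p2 i2 = Id C Y \<and>
     Cmp C p2 i1 = Zero C X Y \<and> Cmp C p1 i2 = Zero C Y X \<and>
     Add C (Cmp C i1 p1) (Cmp C i2 p2) = Id C P"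

definition additive_cat :: "('o,'m) tcat \<Rightarrow> bool" where
  "additive_cat C \<longleftrightarrow>
     (\<forall>X Y. (X \<notin> Obj C \<or> Y \<notin> Obj C) \<longrightarrow> Hom C X Y = {}) \<and>
     (\<forall>X Y X' Y' f. f \<in> Hom C X Y \<and> f \<in> Hom C X' Y' \<longrightarrow> X = X' \<and> Y = Y') \<and>
     (\<forall>X Y Z f g. f \<in> Hom C X Y \<longrightarrow> g \<in> Hom C Y Z \<longrightarrow> Cmp C g f \<in> Hom C X Z) \<and>
     (\<forall>X Y Z W f g h. f \<in> Hom C X Y \<longrightarrow> g \<in> Hom C Y Z \<longrightarrow> h \<in> Hom C Z W \<longrightarrow>
        Cmp C h (Cmp C g f) = Cmp C (Cmp C h g) f) \<and>
     (\<forall>X \<in> Obj C. Id C X \<in> Hom C X X) \<and>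
     (\<forall>X Y f. f \<in> Hom C X Y \<longrightarrow> Cmp C f (Id C X) = f \<and> Cmp C (Id C Y) f = f) \<and>
     (\<forall>X \<in> Obj C. \<forall>Y \<in> Obj C. Zero C X Y \<in> Hom C X Y) \<and>
     (\<forall>X Y f g. f \<in> Hom C X Y \<longrightarrow> g \<in> Hom C X Y \<longrightarrow> Add C f g \<in> Hom C X Y) \<and>
     (\<forall>X Y f. f \<in> Hom C X Y \<longrightarrow> Neg C f \<in> Hom C X Y) \<and>
     (\<forall>X Y f g h. f \<in> Hom C X Y \<longrightarrow> g \<in> Hom C X Y \<longrightarrow> h \<in> Hom C X Y \<longrightarrow>
        Add C (Add C f g) h = Add C f (Add C g h)) \<and>
     (\<forall>X Y f g. f \<in> Hom C X Y \<longrightarrow> g \<in> Hom C X Y \<longrightarrow> Add C f g = Add C g f) \<and>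
     (\<forall>X Y f. f \<in> Hom C X Y \<longrightarrow> Add C f (Zero C X Y) = f) \<and>
     (\<forall>X Y f. f \<in> Hom C X Y \<longrightarrow> Add C f (Neg C f) = Zero C X Y) \<and>
     (\<forall>X Y Z f g h. f \<in> Hom C X Y \<longrightarrow> g \<in> Hom C X Y \<longrightarrow> h \<in> Hom C Y Z \<longrightarrow>
        Cmp C h (Add C f g) = Add C (Cmp C h f) (Cmp C h g)) \<and>
     (\<forall>X Y Z f g h. f \<in> Hom C Y Z \<longrightarrow> g \<in> Hom C Y Z \<longrightarrow> h \<in> Hom C X Y \<longrightarrow>
        Cmp C (Add C f g) h = Add C (Cmp C f h) (Cmp C g h)) \<and>
     (\<exists>Oz. zero_obj C Oz) \<and>
     (\<forall>X \<in> Obj C. \<forall>Y \<in> Obj C. \<exists>P i1 i2 p1 p2. biprod C X Y P i1 i2 p1 p2)"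

definition shift_ok :: "('o,'m) tcat \<Rightarrow> bool" where
  "shift_ok C \<longleftrightarrow>
     (\<forall>X \<in> Obj C. Sh C X \<in> Obj C) \<and>
     (\<forall>X Y f. f \<in> Hom C X Y \<longrightarrow> ShM C f \<in> Hom C (Sh C X) (Sh C Y)) \<and>
     (\<forall>X \<in> Obj C. ShM C (Id C X) = Id C (Sh C X)) \<and>
     (\<forall>X Y Z f g. f \<in> Hom C X Y \<longrightarrow> g \<in> Hom C Y Z \<longrightarrow>
        ShM C (Cmp C g f) = Cmp C (ShM C g) (ShM C f)) \<and>
     (\<forall>X Y f g. f \<in> Hom C X Y \<longrightarrow> g \<in> Hom C X Y \<longrightarrow>
        ShM C (Add C f g) = Add C (ShM C f) (ShM C g)) \<and>
     (\<forall>X \<in> Obj C. \<forall>Y \<in> Obj C. bij_betw (ShM C) (Hom C X Y) (Hom C (Sh C X) (Sh C Y))) \<and>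
     (\<forall>Y \<in> Obj C. \<exists>X \<in> Obj C. iso_ob C (Sh C X) Y)"

definition is_triangle :: "('o,'m) tcat \<Rightarrow> 'o \<times> 'o \<times> 'o \<times> 'm \<times> 'm \<times> 'm \<Rightarrow> bool" where
  "is_triangle C t \<longleftrightarrow> (case t of (X, Y, Z, f, g, h) \<Rightarrow>
     f \<in> Hom C X Y \<and> g \<in> Hom C Y Z \<and> h \<in> Hom C Z (Sh C X))"

definition tri_mor :: "('o,'m) tcat \<Rightarrow> 'o \<times> 'o \<times> 'o \<times> 'm \<times> 'm \<times> 'm \<Rightarrow>
    'o \<times> 'o \<times> 'o \<times> 'm \<times> 'm \<times> 'm \<Rightarrow> 'm \<Rightarrow> 'm \<Rightarrow> 'm \<Rightarrow> bool" where
  "tri_mor C t t' u v w \<longleftrightarrow> (case t of (X, Y, Z, f, g, h) \<Rightarrow> case t' of (X', Y', Z', f', g', h') \<Rightarrow>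
     u \<in> Hom C X X' \<and> v \<in> Hom C Y Y' \<and> w \<in> Hom C Z Z' \<and>
     Cmp C v f = Cmp C f' u \<and> Cmp C w g = Cmp C g' v \<and> Cmp C (ShM C u) h = Cmp C h' w)"

definition triangulated :: "('o,'m) tcat \<Rightarrow> bool" where
  "triangulated C \<longleftrightarrow> additive_cat C \<and> shift_ok C \<and>
     (\<forall>t \<in> Tri C. is_triangle C t) \<and>
     \<comment> \<open>TR1: closure under isomorphism of triangles\<close>
     (\<forall>t t' u v w. t \<in> Tri C \<longrightarrow> is_triangle C t' \<longrightarrow> tri_mor C t t' u v w \<longrightarrow>
        (case t of (X, Y, Z, _) \<Rightarrow> case t' of (X', Y', Z', _) \<Rightarrow>
           is_iso C X X' u \<and> is_iso C Y Y' v \<and> is_iso C Z Z' w) \<longrightarrow> t' \<in> Tri C) \<and>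
     \<comment> \<open>TR1: X --1--> X --> 0 --> X[1]\<close>
     (\<forall>X \<in> Obj C. \<forall>Oz. zero_obj C Oz \<longrightarrow>
        (X, X, Oz, Id C X, Zero C X Oz, Zero C Oz (Sh C X)) \<in> Tri C) \<and>
     \<comment> \<open>TR1: every morphism embeds in a distinguished triangle\<close>
     (\<forall>X Y f. f \<in> Hom C X Y \<longrightarrow> (\<exists>Z g h. (X, Y, Z, f, g, h) \<in> Tri C)) \<and>
     \<comment> \<open>TR2: rotation\<close>
     (\<forall>X Y Z f g h. f \<in> Hom C X Y \<longrightarrow> g \<in> Hom C Y Z \<longrightarrow> h \<in> Hom C Z (Sh C X) \<longrightarrow>
        ((X, Y, Z, f, g, h) \<in> Tri C \<longleftrightarrow> (Y, Z, Sh C X, g, h, Neg C (ShM C f)) \<in> Tri C)) \<and>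
     \<comment> \<open>TR3: completion of morphisms of triangles\<close>
     (\<forall>X Y Z f g h X' Y' Z' f' g' h' u v.
        (X, Y, Z, f, g, h) \<in> Tri C \<longrightarrow> (X', Y', Z', f', g', h') \<in> Tri C \<longrightarrow>
        u \<in> Hom C X X' \<longrightarrow> v \<in> Hom C Y Y' \<longrightarrow> Cmp C v f = Cmp C f' u \<longrightarrow>
        (\<exists>w. tri_mor C (X, Y, Z, f, g, h) (X', Y', Z', f', g', h') u v w)) \<and>
     \<comment> \<open>TR4: octahedral axiom\<close>
     (\<forall>X Y Z f g Z' f2 f3 X' g2 g3 Y' h2 h3.
        (X, Y, Z', f, f2, f3) \<in> Tri C \<longrightarrow> (Y, Z, X', g, g2, g3) \<in> Tri C \<longrightarrow>
        (X, Z, Y', Cmp C g f, h2, h3) \<in> Tri C \<longrightarrow>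
        (\<exists>u v. (Z', Y', X', u, v, Cmp C (ShM C f2) g3) \<in> Tri C \<and>
           Cmp C u f2 = Cmp C h2 g \<and> Cmp C h3 u = f3 \<and>
           Cmp C v h2 = g2 \<and> Cmp C g3 v = Cmp C (ShM C f) h3))"

text \<open>Subcategories: full (given by a class of objects), additive (contain a zero object
and are closed under finite direct sums), closed under isomorphisms and direct summands.\<close>
definition subcat :: "('o,'m) tcat \<Rightarrow> 'o set \<Rightarrow> bool" where
  "subcat C A \<longleftrightarrow> A \<subseteq> Obj C \<and> (\<exists>Oz \<in> A. zero_obj C Oz) \<and>
     (\<forall>X Y P i1 i2 p1 p2. X \<in> A \<longrightarrow> Y \<in> A \<longrightarrow> biprod C X Y P i1 i2 p1 p2 \<longrightarrow> P \<in> A) \<and>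
     (\<forall>X Y. X \<in> A \<longrightarrow> iso_ob C X Y \<longrightarrow> Y \<in> A) \<and>
     (\<forall>X Y P i1 i2 p1 p2. P \<in> A \<longrightarrow> biprod C X Y P i1 i2 p1 p2 \<longrightarrow> X \<in> A)"

text \<open>Ext^1(A,B) = C(A, B[1]) = 0 for all A in A, B in B.\<close>
definition Ext1_zero :: "('o,'m) tcat \<Rightarrow> 'o set \<Rightarrow> 'o set \<Rightarrow> bool" where
  "Ext1_zero C A B \<longleftrightarrow> (\<forall>X \<in> A. \<forall>Y \<in> B. Hom C X (Sh C Y) = {Zero C X (Sh C Y)})"

text \<open>B[1] (closed under isomorphisms) and A[-1] = objects M with M[1] in A.\<close>
definition shift_up :: "('o,'m) tcat \<Rightarrow> 'o set \<Rightarrow> 'o set" where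
  "shift_up C B = {N \<in> Obj C. \<exists>Y \<in> B. iso_ob C N (Sh C Y)}"

definition shift_down :: "('o,'m) tcat \<Rightarrow> 'o set \<Rightarrow> 'o set" where
  "shift_down C A = {M \<in> Obj C. Sh C M \<in> A}"

definition ext_star :: "('o,'m) tcat \<Rightarrow> 'o set \<Rightarrow> 'o set \<Rightarrow> 'o set" where
  "ext_star C M N = {Y \<in> Obj C. \<exists>A B f g h. A \<in> M \<and> B \<in> N \<and> (A, Y, B, f, g, h) \<in> Tri C}"

definition cotorsion_pair :: "('o,'m) tcat \<Rightarrow> 'o set \<Rightarrow> 'o set \<Rightarrow> bool" where
  "cotorsion_pair C U V \<longleftrightarrow> subcat C U \<and> subcat C V \<and> Ext1_zero C U V \<and>
     Obj C = ext_star C U (shift_up C V)"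

definition twin_cotorsion_pair :: "('o,'m) tcat \<Rightarrow> 'o set \<Rightarrow> 'o set \<Rightarrow> 'o set \<Rightarrow> 'o set \<Rightarrow> bool" where
  "twin_cotorsion_pair C S T U V \<longleftrightarrow>
     cotorsion_pair C S T \<and> cotorsion_pair C U V \<and> Ext1_zero C S V"

definition Wcore :: "'o set \<Rightarrow> 'o set \<Rightarrow> 'o set" where
  "Wcore T U = T \<inter> U"

definition Cminus :: "('o,'m) tcat \<Rightarrow> 'o set \<Rightarrow> 'o set \<Rightarrow> 'o set \<Rightarrow> 'o set" where
  "Cminus C S T U = ext_star C (shift_down C S) (Wcore T U)"

definition Cplus :: "('o,'m) tcat \<Rightarrow> 'o set \<Rightarrow> 'o set \<Rightarrow> 'o set \<Rightarrow> 'o set" where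
  "Cplus C T U V = ext_star C (Wcore T U) (shift_up C V)"

definition Hcore :: "('o,'m) tcat \<Rightarrow> 'o set \<Rightarrow> 'o set \<Rightarrow> 'o set \<Rightarrow> 'o set \<Rightarrow> 'o set" where
  "Hcore C S T U V = Cplus C T U V \<inter> Cminus C S T U"

text \<open>Ideal of morphisms factoring through an object of W; equality in the ideal quotient.\<close>
definition factors_through :: "('o,'m) tcat \<Rightarrow> 'o set \<Rightarrow> 'o \<Rightarrow> 'o \<Rightarrow> 'm \<Rightarrow> bool" where
  "factors_through C W X Y f \<longleftrightarrow>
     (\<exists>W0 \<in> W. \<exists>u \<in> Hom C X W0. \<exists>v \<in> Hom C W0 Y. f = Cmp C v u)"

definition quot_eq :: "('o,'m) tcat \<Rightarrow> 'o set \<Rightarrow> 'o \<Rightarrow> 'o \<Rightarrow> 'm \<Rightarrow> 'm \<Rightarrow> bool" where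
  "quot_eq C W X Y f g \<longleftrightarrow> f \<in> Hom C X Y \<and> g \<in> Hom C X Y \<and>
     factors_through C W X Y (Add C f (Neg C g))"

text \<open>The class of z (in Hom(Z,B), Z,B in H) is an epimorphism in the ideal
quotient of the full subcategory H by morphisms factoring through W.\<close>
definition quot_epi :: "('o,'m) tcat \<Rightarrow> 'o set \<Rightarrow> 'o set \<Rightarrow> 'o \<Rightarrow> 'o \<Rightarrow> 'm \<Rightarrow> bool" where
  "quot_epi C W H Z B z \<longleftrightarrow> Z \<in> H \<and> B \<in> H \<and> z \<in> Hom C Z B \<and>
     (\<forall>D \<in> H. \<forall>g \<in> Hom C B D. \<forall>h \<in> Hom C B D.
        quot_eq C W Z D (Cmp C g z) (Cmp C h z) \<longrightarrow> quot_eq C W B D g h)"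

end

theory Submission
  imports Defs
begin


locale TC =
  fixes C :: "('o,'m) tcat"
  assumes tri: "triangulated C"
begin

lemma add_cat: "additive_cat C" using tri unfolding triangulated_def by (elim conjE)
lemma sh_ok: "shift_ok C" using tri unfolding triangulated_def by (elim conjE)

lemma hom_obj: "f \<in> Hom C X Y \<Longrightarrow> X \<in> Obj C \<and> Y \<in> Obj C"
  using add_cat[unfolded additive_cat_def, THEN conjunct1] by blast
lemma hom_obj1: "f \<in> Hom C X Y \<Longrightarrow> X \<in> Obj C" using hom_obj by blast
lemma hom_obj2: "f \<in> Hom C X Y \<Longrightarrow> Y \<in> Obj C" using hom_obj by blast

lemma cmp_hom[intro]: "f \<in> Hom C X Y \<Longrightarrow> g \<in> Hom C Y Z \<Longrightarrow> Cmp C g f \<in> Hom C X Z"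
  using add_cat[unfolded additive_cat_def, THEN conjunct2, THEN conjunct2, THEN conjunct1] by blast
lemma assoc: "f \<in> Hom C X Y \<Longrightarrow> g \<in> Hom C Y Z \<Longrightarrow> h \<in> Hom C Z W \<Longrightarrow>
        Cmp C h (Cmp C g f) = Cmp C (Cmp C h g) f"
  using add_cat[unfolded additive_cat_def, THEN conjunct2, THEN conjunct2, THEN conjunct2, THEN conjunct1] by blast
lemma id_hom[intro]: "X \<in> Obj C \<Longrightarrow> Id C X \<in> Hom C X X"
  using add_cat[unfolded additive_cat_def, THEN conjunct2, THEN conjunct2, THEN conjunct2, THEN conjunct2, THEN conjunct1] by blast
lemma id_r[simp]: "f \<in> Hom C X Y \<Longrightarrow> Cmp C f (Id C X) = f"
  using add_cat[unfolded additive_cat_def, THEN conjunct2, THEN conjunct2, THEN conjunct2, THEN conjunct2, THEN conjunct2, THEN conjunct1] by blast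
lemma id_l[simp]: "f \<in> Hom C X Y \<Longrightarrow> Cmp C (Id C Y) f = f"
  using add_cat[unfolded additive_cat_def, THEN conjunct2, THEN conjunct2, THEN conjunct2, THEN conjunct2, THEN conjunct2, THEN conjunct1] by blast
lemma zero_hom[intro]: "X \<in> Obj C \<Longrightarrow> Y \<in> Obj C \<Longrightarrow> Zero C X Y \<in> Hom C X Y"
  using add_cat[unfolded additive_cat_def, THEN conjunct2, THEN conjunct2, THEN conjunct2, THEN conjunct2, THEN conjunct2, THEN conjunct2, THEN conjunct1] by blast
lemma add_hom[intro]: "f \<in> Hom C X Y \<Longrightarrow> g \<in> Hom C X Y \<Longrightarrow> Add C f g \<in> Hom C X Y"
  using add_cat[unfolded additive_cat_def, THEN conjunct2, THEN conjunct2, THEN conjunct2, THEN conjunct2, THEN conjunct2, THEN conjunct2, THEN conjunct2, THEN conjunct1] by blast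
lemma neg_hom[intro]: "f \<in> Hom C X Y \<Longrightarrow> Neg C f \<in> Hom C X Y"
  using add_cat[unfolded additive_cat_def, THEN conjunct2, THEN conjunct2, THEN conjunct2, THEN conjunct2, THEN conjunct2, THEN conjunct2, THEN conjunct2, THEN conjunct2, THEN conjunct1] by blast
lemma add_assoc: "f \<in> Hom C X Y \<Longrightarrow> g \<in> Hom C X Y \<Longrightarrow> h \<in> Hom C X Y \<Longrightarrow>
        Add C (Add C f g) h = Add C f (Add C g h)"
  using add_cat[unfolded additive_cat_def, THEN conjunct2, THEN conjunct2, THEN conjunct2, THEN conjunct2, THEN conjunct2, THEN conjunct2, THEN conjunct2, THEN conjunct2, THEN conjunct2, THEN conjunct1] by blast
lemma add_comm: "f \<in> Hom C X Y \<Longrightarrow> g \<in> Hom C X Y \<Longrightarrow> Add C f g = Add C g f"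
  using add_cat[unfolded additive_cat_def, THEN conjunct2, THEN conjunct2, THEN conjunct2, THEN conjunct2, THEN conjunct2, THEN conjunct2, THEN conjunct2, THEN conjunct2, THEN conjunct2, THEN conjunct2, THEN conjunct1] by blast
lemma add_zero: "f \<in> Hom C X Y \<Longrightarrow> Add C f (Zero C X Y) = f"
  using add_cat[unfolded additive_cat_def, THEN conjunct2, THEN conjunct2, THEN conjunct2, THEN conjunct2, THEN conjunct2, THEN conjunct2, THEN conjunct2, THEN conjunct2, THEN conjunct2, THEN conjunct2, THEN conjunct2, THEN conjunct1] by blast
lemma add_neg: "f \<in> Hom C X Y \<Longrightarrow> Add C f (Neg C f) = Zero C X Y"
  using add_cat[unfolded additive_cat_def, THEN conjunct2, THEN conjunct2, THEN conjunct2, THEN conjunct2, THEN conjunct2, THEN conjunct2, THEN conjunct2, THEN conjunct2, THEN conjunct2, THEN conjunct2, THEN conjunct2, THEN conjunct2, THEN conjunct1] by blast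
lemma distl: "f \<in> Hom C X Y \<Longrightarrow> g \<in> Hom C X Y \<Longrightarrow> h \<in> Hom C Y Z \<Longrightarrow>
        Cmp C h (Add C f g) = Add C (Cmp C h f) (Cmp C h g)"
  using add_cat[unfolded additive_cat_def, THEN conjunct2, THEN conjunct2, THEN conjunct2, THEN conjunct2, THEN conjunct2, THEN conjunct2, THEN conjunct2, THEN conjunct2, THEN conjunct2, THEN conjunct2, THEN conjunct2, THEN conjunct2, THEN conjunct2, THEN conjunct1] by blast
lemma distr: "f \<in> Hom C Y Z \<Longrightarrow> g \<in> Hom C Y Z \<Longrightarrow> h \<in> Hom C X Y \<Longrightarrow>
        Cmp C (Add C f g) h = Add C (Cmp C f h) (Cmp C g h)"
  using add_cat[unfolded additive_cat_def, THEN conjunct2, THEN conjunct2, THEN conjunct2, THEN conjunct2, THEN conjunct2, THEN conjunct2, THEN conjunct2, THEN conjunct2, THEN conjunct2, THEN conjunct2, THEN conjunct2, THEN conjunct2, THEN conjunct2, THEN conjunct2, THEN conjunct1] by blast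
lemma ex_zero_obj: "\<exists>Oz. zero_obj C Oz"
  using add_cat[unfolded additive_cat_def, THEN conjunct2, THEN conjunct2, THEN conjunct2, THEN conjunct2, THEN conjunct2, THEN conjunct2, THEN conjunct2, THEN conjunct2, THEN conjunct2, THEN conjunct2, THEN conjunct2, THEN conjunct2, THEN conjunct2, THEN conjunct2, THEN conjunct2, THEN conjunct1] by blast

lemma zero_add: "f \<in> Hom C X Y \<Longrightarrow> Add C (Zero C X Y) f = f"
  by (metis add_comm add_zero hom_obj zero_hom)

lemma neg_unique: assumes f: "f \<in> Hom C X Y" and g: "g \<in> Hom C X Y" and e: "Add C f g = Zero C X Y"
  shows "g = Neg C f"
proof -
  have "g = Add C g (Add C f (Neg C f))" using add_zero add_neg f g by metis
  also have "\<dots> = Add C (Add C g f) (Neg C f)" using add_assoc f g neg_hom by metis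
  also have "\<dots> = Add C (Zero C X Y) (Neg C f)" using e add_comm f g by metis
  also have "\<dots> = Neg C f" using zero_add neg_hom f by blast
  finally show ?thesis .
qed

lemma idem_zero: assumes f: "f \<in> Hom C X Y" and e: "Add C f f = f" shows "f = Zero C X Y"
proof -
  have "f = Add C f (Add C f (Neg C f))" using add_zero add_neg f by metis
  also have "\<dots> = Add C (Add C f f) (Neg C f)" using add_assoc f neg_hom by metis
  also have "\<dots> = Zero C X Y" using e add_neg f by simp
  finally show ?thesis .
qed

lemma cmp_zero_r[simp]: assumes g: "g \<in> Hom C Y Z" and X: "X \<in> Obj C"
  shows "Cmp C g (Zero C X Y) = Zero C X Z"
proof -
  have Y: "Y \<in> Obj C" using g hom_obj by blast
  have z: "Zero C X Y \<in> Hom C X Y" using X Y by blast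
  have "Cmp C g (Zero C X Y) = Cmp C g (Add C (Zero C X Y) (Zero C X Y))" using add_zero z by simp
  also have "\<dots> = Add C (Cmp C g (Zero C X Y)) (Cmp C g (Zero C X Y))" using distl z g by blast
  finally show ?thesis using idem_zero cmp_hom z g by metis
qed

lemma cmp_zero_l[simp]: assumes g: "g \<in> Hom C X Y" and Z: "Z \<in> Obj C"
  shows "Cmp C (Zero C Y Z) g = Zero C X Z"
proof -
  have Y: "Y \<in> Obj C" using g hom_obj by blast
  have z: "Zero C Y Z \<in> Hom C Y Z" using Z Y by blast
  have "Cmp C (Zero C Y Z) g = Cmp C (Add C (Zero C Y Z) (Zero C Y Z)) g" using add_zero z by simp
  also have "\<dots> = Add C (Cmp C (Zero C Y Z) g) (Cmp C (Zero C Y Z) g)" using distr z g by blast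
  finally show ?thesis using idem_zero cmp_hom z g by metis
qed

lemma neg_cmp: assumes f: "f \<in> Hom C Y Z" and h: "h \<in> Hom C X Y"
  shows "Cmp C (Neg C f) h = Neg C (Cmp C f h)"
proof (rule neg_unique)
  show "Cmp C f h \<in> Hom C X Z" "Cmp C (Neg C f) h \<in> Hom C X Z" using f h by blast+
  have "Add C (Cmp C f h) (Cmp C (Neg C f) h) = Cmp C (Add C f (Neg C f)) h"
    using distr f h neg_hom by metis
  also have "\<dots> = Zero C X Z" using add_neg f h cmp_zero_l hom_obj by metis
  finally show "Add C (Cmp C f h) (Cmp C (Neg C f) h) = Zero C X Z" .
qed

lemma cmp_neg: assumes f: "f \<in> Hom C X Y" and h: "h \<in> Hom C Y Z"
  shows "Cmp C h (Neg C f) = Neg C (Cmp C h f)"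
proof (rule neg_unique)
  show "Cmp C h f \<in> Hom C X Z" "Cmp C h (Neg C f) \<in> Hom C X Z" using f h by blast+
  have "Add C (Cmp C h f) (Cmp C h (Neg C f)) = Cmp C h (Add C f (Neg C f))"
    using distl f h neg_hom by metis
  also have "\<dots> = Zero C X Z" using add_neg f h cmp_zero_r hom_obj by metis
  finally show "Add C (Cmp C h f) (Cmp C h (Neg C f)) = Zero C X Z" .
qed

lemma neg_neg[simp]: assumes f: "f \<in> Hom C X Y" shows "Neg C (Neg C f) = f"
proof -
  have "Add C (Neg C f) f = Zero C X Y" using add_comm add_neg f neg_hom by metis
  thus ?thesis using neg_unique f neg_hom by metis
qed

lemma neg_zero[simp]: "X \<in> Obj C \<Longrightarrow> Y \<in> Obj C \<Longrightarrow> Neg C (Zero C X Y) = Zero C X Y"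
  by (metis neg_unique zero_hom add_zero)

lemma sub_zero: assumes f: "f \<in> Hom C X Y" and g: "g \<in> Hom C X Y" and e: "Add C f (Neg C g) = Zero C X Y"
  shows "f = g"
proof -
  have "Add C (Neg C g) f = Zero C X Y" using e add_comm f g neg_hom by metis
  hence "f = Neg C (Neg C g)" using neg_unique neg_hom f g by metis
  thus ?thesis using g by simp
qed

lemma neg_eq_zero: assumes f: "f \<in> Hom C X Y" and e: "Neg C f = Zero C X Y" shows "f = Zero C X Y"
  using neg_neg[OF f] e neg_zero hom_obj f by metis

lemma sh_obj[intro]: "X \<in> Obj C \<Longrightarrow> Sh C X \<in> Obj C" using sh_ok[unfolded shift_ok_def, THEN conjunct1] by blast
lemma shm_hom[intro]: "f \<in> Hom C X Y \<Longrightarrow> ShM C f \<in> Hom C (Sh C X) (Sh C Y)"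
  using sh_ok[unfolded shift_ok_def, THEN conjunct2, THEN conjunct1] by blast
lemma shm_id: "X \<in> Obj C \<Longrightarrow> ShM C (Id C X) = Id C (Sh C X)" using sh_ok[unfolded shift_ok_def, THEN conjunct2, THEN conjunct2, THEN conjunct1] by blast
lemma shm_cmp: "f \<in> Hom C X Y \<Longrightarrow> g \<in> Hom C Y Z \<Longrightarrow> ShM C (Cmp C g f) = Cmp C (ShM C g) (ShM C f)"
  using sh_ok[unfolded shift_ok_def, THEN conjunct2, THEN conjunct2, THEN conjunct2, THEN conjunct1] by blast
lemma shm_add: "f \<in> Hom C X Y \<Longrightarrow> g \<in> Hom C X Y \<Longrightarrow> ShM C (Add C f g) = Add C (ShM C f) (ShM C g)"
  using sh_ok[unfolded shift_ok_def, THEN conjunct2, THEN conjunct2, THEN conjunct2, THEN conjunct2, THEN conjunct1] by blast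
lemma shm_bij: "X \<in> Obj C \<Longrightarrow> Y \<in> Obj C \<Longrightarrow> bij_betw (ShM C) (Hom C X Y) (Hom C (Sh C X) (Sh C Y))"
  using sh_ok[unfolded shift_ok_def, THEN conjunct2, THEN conjunct2, THEN conjunct2, THEN conjunct2, THEN conjunct2, THEN conjunct1] by blast
lemma ess_surj: "Y \<in> Obj C \<Longrightarrow> \<exists>X \<in> Obj C. iso_ob C (Sh C X) Y"
  using sh_ok[unfolded shift_ok_def, THEN conjunct2, THEN conjunct2, THEN conjunct2, THEN conjunct2, THEN conjunct2, THEN conjunct2] by blast

lemma shm_inj: assumes f: "f \<in> Hom C X Y" and g: "g \<in> Hom C X Y" and e: "ShM C f = ShM C g" shows "f = g"
proof -
  have X: "X \<in> Obj C" and Y: "Y \<in> Obj C" using hom_obj f by auto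
  have "inj_on (ShM C) (Hom C X Y)" using bij_betw_imp_inj_on[OF shm_bij[OF X Y]] .
  thus ?thesis using inj_onD f g e by fast
qed
lemma shm_full: assumes X: "X \<in> Obj C" and Y: "Y \<in> Obj C" and n: "n \<in> Hom C (Sh C X) (Sh C Y)"
  shows "\<exists>m \<in> Hom C X Y. ShM C m = n"
proof -
  have "ShM C ` Hom C X Y = Hom C (Sh C X) (Sh C Y)" using bij_betw_imp_surj_on[OF shm_bij[OF X Y]] .
  hence "n \<in> ShM C ` Hom C X Y" using n by simp
  thus ?thesis by (elim imageE) (rule bexI, rule sym)
qed

lemma shm_zero: assumes X: "X \<in> Obj C" and Y: "Y \<in> Obj C" shows "ShM C (Zero C X Y) = Zero C (Sh C X) (Sh C Y)"
proof -
  have z: "Zero C X Y \<in> Hom C X Y" using X Y by blast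
  have "ShM C (Zero C X Y) = ShM C (Add C (Zero C X Y) (Zero C X Y))" using add_zero z by simp
  also have "\<dots> = Add C (ShM C (Zero C X Y)) (ShM C (Zero C X Y))" using shm_add z by blast
  finally show ?thesis using idem_zero[OF shm_hom[OF z]] by simp
qed

lemma shm_neg: assumes f: "f \<in> Hom C X Y" shows "ShM C (Neg C f) = Neg C (ShM C f)"
proof (rule neg_unique)
  show "ShM C f \<in> Hom C (Sh C X) (Sh C Y)" "ShM C (Neg C f) \<in> Hom C (Sh C X) (Sh C Y)" using f by blast+
  have "Add C (ShM C f) (ShM C (Neg C f)) = ShM C (Add C f (Neg C f))" using shm_add[OF f neg_hom[OF f]] by simp
  also have "\<dots> = Zero C (Sh C X) (Sh C Y)" using add_neg[OF f] shm_zero hom_obj[OF f] by simp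
  finally show "Add C (ShM C f) (ShM C (Neg C f)) = Zero C (Sh C X) (Sh C Y)" .
qed

lemma sh_reflect_zero: assumes m: "m \<in> Hom C X Y" and H: "Hom C (Sh C X) (Sh C Y) = {Zero C (Sh C X) (Sh C Y)}"
  shows "m = Zero C X Y"
proof -
  have X: "X \<in> Obj C" and Y: "Y \<in> Obj C" using m hom_obj by auto
  have "ShM C m = ShM C (Zero C X Y)" using H shm_hom[OF m] shm_zero[OF X Y] by auto
  thus ?thesis using shm_inj m X Y by blast
qed

lemma iso_inv: "is_iso C X Y f \<Longrightarrow> \<exists>g. is_iso C Y X g \<and> Cmp C g f = Id C X \<and> Cmp C f g = Id C Y"
  unfolding is_iso_def by blast
lemma iso_hom: "is_iso C X Y f \<Longrightarrow> f \<in> Hom C X Y" unfolding is_iso_def by blast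
lemma iso_id: "X \<in> Obj C \<Longrightarrow> is_iso C X X (Id C X)" unfolding is_iso_def using id_r[OF id_hom] by (intro conjI id_hom bexI[of _ "Id C X"]) auto

lemma singleton_zero: "Hom C X Y = {Zero C X Y} \<Longrightarrow> m \<in> Hom C X Y \<Longrightarrow> m = Zero C X Y" by blast

end

context TC
begin

lemma tri_homs: "(X,Y,Z,f,g,h) \<in> Tri C \<Longrightarrow> f \<in> Hom C X Y \<and> g \<in> Hom C Y Z \<and> h \<in> Hom C Z (Sh C X)"
proof -
  assume a: "(X,Y,Z,f,g,h) \<in> Tri C"
  have "\<forall>t \<in> Tri C. is_triangle C t" using tri unfolding triangulated_def by (elim conjE)
  with a show ?thesis unfolding is_triangle_def by auto
qed

lemma TR1iso: assumes t: "(X,Y,Z,f,g,h) \<in> Tri C"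
  and t': "is_triangle C (X',Y',Z',f',g',h')"
  and m: "tri_mor C (X,Y,Z,f,g,h) (X',Y',Z',f',g',h') u v w"
  and i: "is_iso C X X' u" "is_iso C Y Y' v" "is_iso C Z Z' w"
  shows "(X',Y',Z',f',g',h') \<in> Tri C"
proof -
  have ax: "\<forall>t t' u v w. t \<in> Tri C \<longrightarrow> is_triangle C t' \<longrightarrow> tri_mor C t t' u v w \<longrightarrow>
        (case t of (X, Y, Z, _) \<Rightarrow> case t' of (X', Y', Z', _) \<Rightarrow>
           is_iso C X X' u \<and> is_iso C Y Y' v \<and> is_iso C Z Z' w) \<longrightarrow> t' \<in> Tri C"
    using tri unfolding triangulated_def by (elim conjE)
  show ?thesis using ax[rule_format, OF t t' m] i by simp
qed

lemma TR1zero: "X \<in> Obj C \<Longrightarrow> zero_obj C Oz \<Longrightarrow> (X, X, Oz, Id C X, Zero C X Oz, Zero C Oz (Sh C X)) \<in> Tri C"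
  using tri[unfolded triangulated_def, THEN conjunct2, THEN conjunct2, THEN conjunct2, THEN conjunct2, THEN conjunct1] by blast

lemma TR1ex: "f \<in> Hom C X Y \<Longrightarrow> \<exists>Z g h. (X, Y, Z, f, g, h) \<in> Tri C"
  using tri[unfolded triangulated_def, THEN conjunct2, THEN conjunct2, THEN conjunct2, THEN conjunct2, THEN conjunct2, THEN conjunct1] by blast

lemma TR2: "f \<in> Hom C X Y \<Longrightarrow> g \<in> Hom C Y Z \<Longrightarrow> h \<in> Hom C Z (Sh C X) \<Longrightarrow>
        ((X, Y, Z, f, g, h) \<in> Tri C \<longleftrightarrow> (Y, Z, Sh C X, g, h, Neg C (ShM C f)) \<in> Tri C)"
  using tri[unfolded triangulated_def, THEN conjunct2, THEN conjunct2, THEN conjunct2, THEN conjunct2, THEN conjunct2, THEN conjunct2, THEN conjunct1] by blast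

lemma TR3: "(X, Y, Z, f, g, h) \<in> Tri C \<Longrightarrow> (X', Y', Z', f', g', h') \<in> Tri C \<Longrightarrow>
        u \<in> Hom C X X' \<Longrightarrow> v \<in> Hom C Y Y' \<Longrightarrow> Cmp C v f = Cmp C f' u \<Longrightarrow>
        (\<exists>w. tri_mor C (X, Y, Z, f, g, h) (X', Y', Z', f', g', h') u v w)"
proof -
  have ax: "\<forall>X Y Z f g h X' Y' Z' f' g' h' u v.
        (X, Y, Z, f, g, h) \<in> Tri C \<longrightarrow> (X', Y', Z', f', g', h') \<in> Tri C \<longrightarrow>
        u \<in> Hom C X X' \<longrightarrow> v \<in> Hom C Y Y' \<longrightarrow> Cmp C v f = Cmp C f' u \<longrightarrow>
        (\<exists>w. tri_mor C (X, Y, Z, f, g, h) (X', Y', Z', f', g', h') u v w)"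
    using tri unfolding triangulated_def by (elim conjE)
  thus "(X, Y, Z, f, g, h) \<in> Tri C \<Longrightarrow> (X', Y', Z', f', g', h') \<in> Tri C \<Longrightarrow>
        u \<in> Hom C X X' \<Longrightarrow> v \<in> Hom C Y Y' \<Longrightarrow> Cmp C v f = Cmp C f' u \<Longrightarrow>
        (\<exists>w. tri_mor C (X, Y, Z, f, g, h) (X', Y', Z', f', g', h') u v w)" by blast
qed

lemma octa: "(X, Y, Z', f, f2, f3) \<in> Tri C \<Longrightarrow> (Y, Z, X', g, g2, g3) \<in> Tri C \<Longrightarrow>
        (X, Z, Y', Cmp C g f, h2, h3) \<in> Tri C \<Longrightarrow> \<exists>u v w. (Z', Y', X', u, v, w) \<in> Tri C"
proof -
  have ax: "\<forall>X Y Z f g Z' f2 f3 X' g2 g3 Y' h2 h3.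
        (X, Y, Z', f, f2, f3) \<in> Tri C \<longrightarrow> (Y, Z, X', g, g2, g3) \<in> Tri C \<longrightarrow>
        (X, Z, Y', Cmp C g f, h2, h3) \<in> Tri C \<longrightarrow>
        (\<exists>u v. (Z', Y', X', u, v, Cmp C (ShM C f2) g3) \<in> Tri C \<and>
           Cmp C u f2 = Cmp C h2 g \<and> Cmp C h3 u = f3 \<and>
           Cmp C v h2 = g2 \<and> Cmp C g3 v = Cmp C (ShM C f) h3)"
    using tri unfolding triangulated_def by (elim conjE)
  thus "(X, Y, Z', f, f2, f3) \<in> Tri C \<Longrightarrow> (Y, Z, X', g, g2, g3) \<in> Tri C \<Longrightarrow>
        (X, Z, Y', Cmp C g f, h2, h3) \<in> Tri C \<Longrightarrow> \<exists>u v w. (Z', Y', X', u, v, w) \<in> Tri C" by blast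
qed

lemma rot: assumes t: "(X,Y,Z,f,g,h) \<in> Tri C" shows "(Y,Z,Sh C X,g,h,Neg C (ShM C f)) \<in> Tri C"
  using TR2 tri_homs[OF t] t by blast

lemma rot_back: assumes t: "(Y,Z,Sh C X',g,h,k) \<in> Tri C" and X': "X' \<in> Obj C"
  shows "\<exists>f. (X',Y,Z,f,g,h) \<in> Tri C"
proof -
  have g: "g \<in> Hom C Y Z" and h: "h \<in> Hom C Z (Sh C X')" and k: "k \<in> Hom C (Sh C X') (Sh C Y)"
    using tri_homs[OF t] by auto
  have Y: "Y \<in> Obj C" using g hom_obj by blast
  obtain f where f: "f \<in> Hom C X' Y" and sf: "ShM C f = Neg C k" using shm_full[OF X' Y] neg_hom[OF k] by blast
  have "Neg C (ShM C f) = k" using sf k by simp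
  hence "(X',Y,Z,f,g,h) \<in> Tri C" using TR2[OF f g h] t by simp
  thus ?thesis by blast
qed

lemma tri_iso3: assumes t: "(X,Y,Z,f,g,h) \<in> Tri C" and j: "is_iso C Z Z' j"
  shows "\<exists>g' h'. (X,Y,Z',f,g',h') \<in> Tri C"
proof -
  obtain j' where j': "is_iso C Z' Z j'" and jj: "Cmp C j' j = Id C Z" using iso_inv[OF j] by blast
  have f: "f \<in> Hom C X Y" and g: "g \<in> Hom C Y Z" and h: "h \<in> Hom C Z (Sh C X)" using tri_homs[OF t] by auto
  have jh: "j \<in> Hom C Z Z'" and j'h: "j' \<in> Hom C Z' Z" using iso_hom j j' by auto
  have X: "X \<in> Obj C" and Y: "Y \<in> Obj C" using f hom_obj by auto
  have hjj: "Cmp C (Cmp C h j') j = h" using assoc[OF jh j'h h] jj h by simp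
  have jg: "Cmp C j g \<in> Hom C Y Z'" using g jh by blast
  have hj': "Cmp C h j' \<in> Hom C Z' (Sh C X)" using h j'h by blast
  have m: "tri_mor C (X,Y,Z,f,g,h) (X,Y,Z',f,Cmp C j g,Cmp C h j') (Id C X) (Id C Y) j"
    unfolding tri_mor_def using id_hom[OF X] id_hom[OF Y] jh id_l[OF f] id_r[OF f] id_r[OF jg]
      id_l[OF h] shm_id[OF X] hjj by simp
  have "(X,Y,Z',f,Cmp C j g, Cmp C h j') \<in> Tri C"
    using TR1iso[OF t _ m iso_id[OF X] iso_id[OF Y] j] f jg hj' unfolding is_triangle_def by simp
  thus ?thesis by blast
qed

lemma comp_zero: assumes t: "(X,Y,Z,f,g,h) \<in> Tri C" shows "Cmp C g f = Zero C X Z"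
proof -
  have f: "f \<in> Hom C X Y" and g: "g \<in> Hom C Y Z" and h: "h \<in> Hom C Z (Sh C X)" using tri_homs[OF t] by auto
  have X: "X \<in> Obj C" and Z: "Z \<in> Obj C" using f g hom_obj by auto
  obtain Oz where Oz: "zero_obj C Oz" using ex_zero_obj by blast
  have t0: "(X, X, Oz, Id C X, Zero C X Oz, Zero C Oz (Sh C X)) \<in> Tri C" using TR1zero[OF X Oz] .
  obtain w where "tri_mor C (X, X, Oz, Id C X, Zero C X Oz, Zero C Oz (Sh C X)) (X,Y,Z,f,g,h) (Id C X) f w"
    using TR3[OF t0 t id_hom[OF X] f] f by auto
  hence w: "w \<in> Hom C Oz Z" and e: "Cmp C w (Zero C X Oz) = Cmp C g f" unfolding tri_mor_def by auto
  show ?thesis using e cmp_zero_r[OF w X] by simp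
qed

lemma comp_zero3: assumes t: "(X,Y,Z,f,g,h) \<in> Tri C" shows "Cmp C (ShM C f) h = Zero C Z (Sh C Y)"
proof -
  have f: "f \<in> Hom C X Y" and g: "g \<in> Hom C Y Z" and h: "h \<in> Hom C Z (Sh C X)" using tri_homs[OF t] by auto
  have "(Z, Sh C X, Sh C Y, h, Neg C (ShM C f), Neg C (ShM C g)) \<in> Tri C" using rot[OF rot[OF t]] .
  hence "Cmp C (Neg C (ShM C f)) h = Zero C Z (Sh C Y)" by (rule comp_zero)
  hence "Neg C (Cmp C (ShM C f) h) = Zero C Z (Sh C Y)" using neg_cmp[OF shm_hom[OF f] h] by simp
  thus ?thesis using neg_eq_zero cmp_hom[OF h shm_hom[OF f]] by blast
qed

lemma exact_cov: assumes t: "(X,Y,Z,f,g,h) \<in> Tri C" and y: "y \<in> Hom C D Y" and e: "Cmp C g y = Zero C D Z"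
  shows "\<exists>w\<in>Hom C D X. Cmp C f w = y"
proof -
  have f: "f \<in> Hom C X Y" and g: "g \<in> Hom C Y Z" and h: "h \<in> Hom C Z (Sh C X)" using tri_homs[OF t] by auto
  have D: "D \<in> Obj C" and X: "X \<in> Obj C" and Z: "Z \<in> Obj C" using y f g hom_obj by auto
  obtain Oz where Oz: "zero_obj C Oz" using ex_zero_obj by blast
  have Ozo: "Oz \<in> Obj C" using Oz unfolding zero_obj_def by blast
  have t0: "(D, Oz, Sh C D, Zero C D Oz, Zero C Oz (Sh C D), Neg C (ShM C (Id C D))) \<in> Tri C"
    using rot[OF TR1zero[OF D Oz]] .
  have t1: "(Y, Z, Sh C X, g, h, Neg C (ShM C f)) \<in> Tri C" using rot[OF t] .
  have c: "Cmp C (Zero C Oz Z) (Zero C D Oz) = Cmp C g y" using e cmp_zero_r[OF zero_hom[OF Ozo Z] D] by simp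
  obtain w where "tri_mor C (D, Oz, Sh C D, Zero C D Oz, Zero C Oz (Sh C D), Neg C (ShM C (Id C D)))
      (Y, Z, Sh C X, g, h, Neg C (ShM C f)) y (Zero C Oz Z) w"
    using TR3[OF t0 t1 y zero_hom[OF Ozo Z] c] by blast
  hence w: "w \<in> Hom C (Sh C D) (Sh C X)"
    and e2: "Cmp C (ShM C y) (Neg C (ShM C (Id C D))) = Cmp C (Neg C (ShM C f)) w"
    unfolding tri_mor_def by auto
  have sy: "ShM C y \<in> Hom C (Sh C D) (Sh C Y)" using y by blast
  have sf: "ShM C f \<in> Hom C (Sh C X) (Sh C Y)" using f by blast
  have "Cmp C (ShM C y) (Neg C (ShM C (Id C D))) = Neg C (ShM C y)"
    using cmp_neg[OF id_hom[OF sh_obj[OF D]] sy] shm_id[OF D] sy by simp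
  moreover have "Cmp C (Neg C (ShM C f)) w = Neg C (Cmp C (ShM C f) w)" using neg_cmp[OF sf w] .
  ultimately have "Neg C (ShM C y) = Neg C (Cmp C (ShM C f) w)" using e2 by simp
  hence "Neg C (Neg C (ShM C y)) = Neg C (Neg C (Cmp C (ShM C f) w))" by (rule arg_cong)
  hence e3: "ShM C y = Cmp C (ShM C f) w" unfolding neg_neg[OF sy] neg_neg[OF cmp_hom[OF w sf]] .
  obtain w' where w': "w' \<in> Hom C D X" and sw: "ShM C w' = w" using shm_full[OF D X w] by blast
  have "ShM C y = ShM C (Cmp C f w')" using e3 sw shm_cmp[OF w' f] by simp
  hence "y = Cmp C f w'" using shm_inj[OF y cmp_hom[OF w' f]] by simp
  thus ?thesis using w' by blast
qed

lemma exact_contra: assumes t: "(X,Y,Z,f,g,h) \<in> Tri C" and y: "y \<in> Hom C Y D" and e: "Cmp C y f = Zero C X D"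
  shows "\<exists>w\<in>Hom C Z D. Cmp C w g = y"
proof -
  have f: "f \<in> Hom C X Y" and g: "g \<in> Hom C Y Z" and h: "h \<in> Hom C Z (Sh C X)" using tri_homs[OF t] by auto
  have D: "D \<in> Obj C" and X: "X \<in> Obj C" and Z: "Z \<in> Obj C" using y f g hom_obj by auto
  obtain Oz where Oz: "zero_obj C Oz" using ex_zero_obj by blast
  have Ozo: "Oz \<in> Obj C" using Oz unfolding zero_obj_def by blast
  obtain A where A: "A \<in> Obj C" and iA: "iso_ob C (Sh C A) Oz" using ess_surj[OF Ozo] by blast
  obtain i where i: "is_iso C (Sh C A) Oz i" using iA unfolding iso_ob_def by blast
  obtain j where j: "is_iso C Oz (Sh C A) j" using iso_inv[OF i] by blast
  obtain g' h' where "(D, D, Sh C A, Id C D, g', h') \<in> Tri C" using tri_iso3[OF TR1zero[OF D Oz] j] by blast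
  then obtain \<alpha> where t0: "(A, D, D, \<alpha>, Id C D, g') \<in> Tri C" using rot_back A by blast
  have al: "\<alpha> \<in> Hom C A D" using tri_homs[OF t0] by blast
  have c: "Cmp C y f = Cmp C \<alpha> (Zero C X A)" using e cmp_zero_r[OF al X] by simp
  obtain w where "tri_mor C (X,Y,Z,f,g,h) (A, D, D, \<alpha>, Id C D, g') (Zero C X A) y w"
    using TR3[OF t t0 zero_hom[OF X A] y c] by blast
  hence w: "w \<in> Hom C Z D" and e2: "Cmp C w g = Cmp C (Id C D) y" unfolding tri_mor_def by auto
  thus ?thesis using y by auto
qed

end

context TC
begin

lemma retract_biprod: assumes f: "f \<in> Hom C Y S1" and s: "s \<in> Hom C S1 Y" and fs: "Cmp C f s = Id C S1"
  shows "\<exists>K i2 p2. biprod C S1 K Y s i2 f p2"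
proof -
  obtain K k l where t: "(S1, Y, K, s, k, l) \<in> Tri C" using TR1ex[OF s] by blast
  have k: "k \<in> Hom C Y K" and l: "l \<in> Hom C K (Sh C S1)" using tri_homs[OF t] by auto
  have S1: "S1 \<in> Obj C" and Y: "Y \<in> Obj C" and K: "K \<in> Obj C" using s k hom_obj by auto
  have sl: "Cmp C (ShM C s) l = Zero C K (Sh C Y)" using comp_zero3[OF t] .
  have fs': "Cmp C (ShM C f) (ShM C s) = Id C (Sh C S1)" using shm_cmp[OF s f] fs shm_id[OF S1] by simp
  have "l = Cmp C (Cmp C (ShM C f) (ShM C s)) l" using fs' l by simp
  also have "\<dots> = Cmp C (ShM C f) (Cmp C (ShM C s) l)" using assoc[OF l shm_hom[OF s] shm_hom[OF f]] by simp
  also have "\<dots> = Zero C K (Sh C S1)" using sl shm_hom[OF f] K by simp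
  finally have l0: "l = Zero C K (Sh C S1)" .
  have t1: "(Y, K, Sh C S1, k, l, Neg C (ShM C s)) \<in> Tri C" using rot[OF t] .
  obtain t where th: "t \<in> Hom C K Y" and kt: "Cmp C k t = Id C K"
    using exact_cov[OF t1 id_hom[OF K]] l l0 by auto
  have ks: "Cmp C k s = Zero C S1 K" using comp_zero[OF t] .
  define sft where "sft = Cmp C s (Cmp C f t)"
  have sfth: "sft \<in> Hom C K Y" unfolding sft_def using s f th by blast
  have ft: "Cmp C f t \<in> Hom C K S1" using f th by blast
  have fsft: "Cmp C f sft = Cmp C f t" unfolding sft_def using assoc[OF ft s f] fs ft by simp
  have ksft: "Cmp C k sft = Zero C K K" unfolding sft_def using assoc[OF ft s k] ks ft K by simp
  define t' where "t' = Add C t (Neg C sft)"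
  have t'h: "t' \<in> Hom C K Y" unfolding t'_def using th sfth by blast
  have ft': "Cmp C f t' = Zero C K S1"
    unfolding t'_def using distl[OF th neg_hom[OF sfth] f] cmp_neg[OF sfth f] fsft add_neg[OF ft] by simp
  have kt': "Cmp C k t' = Id C K"
    unfolding t'_def using distl[OF th neg_hom[OF sfth] k] cmp_neg[OF sfth k] ksft kt add_zero[OF id_hom[OF K]] K by simp
  have sf: "Cmp C s f \<in> Hom C Y Y" using s f by blast
  have t'k: "Cmp C t' k \<in> Hom C Y Y" using t'h k by blast
  have sm: "Add C (Cmp C s f) (Cmp C t' k) \<in> Hom C Y Y" using sf t'k by blast
  define e where "e = Add C (Id C Y) (Neg C (Add C (Cmp C s f) (Cmp C t' k)))"
  have eh: "e \<in> Hom C Y Y" unfolding e_def using sm Y by blast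
  have ksf: "Cmp C k (Cmp C s f) = Zero C Y K" using assoc[OF f s k] ks f K by simp
  have kt'k: "Cmp C k (Cmp C t' k) = k" using assoc[OF k t'h k] kt' k by simp
  have "Cmp C k e = Add C k (Neg C (Add C (Cmp C k (Cmp C s f)) (Cmp C k (Cmp C t' k))))"
    unfolding e_def using distl[OF id_hom[OF Y] neg_hom[OF sm] k] cmp_neg[OF sm k] distl[OF sf t'k k] k by simp
  also have "\<dots> = Zero C Y K" using ksf kt'k zero_add[OF k] add_neg[OF k] by simp
  finally have ke: "Cmp C k e = Zero C Y K" .
  obtain m where m: "m \<in> Hom C Y S1" and sm_e: "Cmp C s m = e" using exact_cov[OF t eh ke] by blast
  have fsf: "Cmp C f (Cmp C s f) = f" using assoc[OF f s f] fs f by simp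
  have ft'k: "Cmp C f (Cmp C t' k) = Zero C Y S1" using assoc[OF k t'h f] ft' k S1 by simp
  have "Cmp C f e = Add C f (Neg C (Add C (Cmp C f (Cmp C s f)) (Cmp C f (Cmp C t' k))))"
    unfolding e_def using distl[OF id_hom[OF Y] neg_hom[OF sm] f] cmp_neg[OF sm f] distl[OF sf t'k f] f by simp
  also have "\<dots> = Zero C Y S1" using fsf ft'k add_zero[OF f] add_neg[OF f] by simp
  finally have fe: "Cmp C f e = Zero C Y S1" .
  have "Cmp C f e = m" using sm_e assoc[OF m s f] fs m by simp
  hence "m = Zero C Y S1" using fe by simp
  hence "e = Zero C Y Y" using sm_e s Y by simp
  hence "Id C Y = Add C (Cmp C s f) (Cmp C t' k)" using sub_zero[OF id_hom[OF Y] sm] unfolding e_def by simp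
  hence "biprod C S1 K Y s t' f k"
    unfolding biprod_def using s t'h f k fs kt' ks ft' by simp
  thus ?thesis by blast
qed

lemma cot_parts: assumes "cotorsion_pair C U V"
  shows "subcat C U" "subcat C V" "Ext1_zero C U V" "Obj C = ext_star C U (shift_up C V)"
  using assms unfolding cotorsion_pair_def by auto

lemma subcat_obj: "subcat C A \<Longrightarrow> X \<in> A \<Longrightarrow> X \<in> Obj C" unfolding subcat_def by blast
lemma subcat_iso: "subcat C A \<Longrightarrow> X \<in> A \<Longrightarrow> iso_ob C X Y \<Longrightarrow> Y \<in> A" unfolding subcat_def by blast
lemma subcat_summand: "subcat C A \<Longrightarrow> P \<in> A \<Longrightarrow> biprod C X Y P i1 i2 p1 p2 \<Longrightarrow> X \<in> A"
  unfolding subcat_def by blast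

lemma zero_shup: assumes H: "\<forall>V1\<in>V. Hom C A0 (Sh C V1) = {Zero C A0 (Sh C V1)}"
  and N: "N \<in> shift_up C V" and m: "m \<in> Hom C A0 N"
  shows "m = Zero C A0 N"
proof -
  obtain V1 j where V1: "V1 \<in> V" and j: "is_iso C N (Sh C V1) j" using N unfolding shift_up_def iso_ob_def by blast
  obtain j' where j': "is_iso C (Sh C V1) N j'" and jj: "Cmp C j' j = Id C N" using iso_inv[OF j] by blast
  have jh: "j \<in> Hom C N (Sh C V1)" and j'h: "j' \<in> Hom C (Sh C V1) N" using j j' iso_hom by auto
  have A0: "A0 \<in> Obj C" using m hom_obj by blast
  have "Cmp C j m = Zero C A0 (Sh C V1)" using H V1 cmp_hom[OF m jh] by blast
  hence "Cmp C j' (Cmp C j m) = Zero C A0 N" using j'h A0 by simp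
  thus ?thesis using assoc[OF m jh j'h] jj m by simp
qed

lemma orth_char: assumes cp: "cotorsion_pair C U V" and Y: "Y \<in> Obj C"
  and H: "\<forall>V1\<in>V. Hom C Y (Sh C V1) = {Zero C Y (Sh C V1)}"
  shows "Y \<in> U"
proof -
  have "Y \<in> ext_star C U (shift_up C V)" using cot_parts(4)[OF cp] Y by simp
  then obtain A B f g h where A: "A \<in> U" and B: "B \<in> shift_up C V" and t: "(A, Y, B, f, g, h) \<in> Tri C"
    unfolding ext_star_def by blast
  have f: "f \<in> Hom C A Y" and g: "g \<in> Hom C Y B" using tri_homs[OF t] by auto
  have g0: "g = Zero C Y B" using zero_shup[OF H B g] .
  obtain s where s: "s \<in> Hom C Y A" and fs: "Cmp C f s = Id C Y"
    using exact_cov[OF t id_hom[OF Y]] g g0 by auto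
  obtain K i2 p2 where "biprod C Y K A s i2 f p2" using retract_biprod[OF f s fs] by blast
  thus ?thesis using subcat_summand[OF cot_parts(1)[OF cp] A] by blast
qed

lemma ext1_zero_elem: "Ext1_zero C U V \<Longrightarrow> A \<in> U \<Longrightarrow> V1 \<in> V \<Longrightarrow> m \<in> Hom C A (Sh C V1) \<Longrightarrow> m = Zero C A (Sh C V1)"
  unfolding Ext1_zero_def by blast

lemma ext_closed: assumes cp: "cotorsion_pair C U V" and t: "(A, Y, B, f, g, h) \<in> Tri C"
  and A: "A \<in> U" and B: "B \<in> U"
  shows "Y \<in> U"
proof (rule orth_char[OF cp])
  have f: "f \<in> Hom C A Y" and g: "g \<in> Hom C Y B" using tri_homs[OF t] by auto
  show Y: "Y \<in> Obj C" using f hom_obj by blast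
  have E: "Ext1_zero C U V" using cot_parts[OF cp] by blast
  show "\<forall>V1\<in>V. Hom C Y (Sh C V1) = {Zero C Y (Sh C V1)}"
  proof
    fix V1 assume V1: "V1 \<in> V"
    have SV: "Sh C V1 \<in> Obj C" using subcat_obj[OF cot_parts(2)[OF cp] V1] by blast
    have "m = Zero C Y (Sh C V1)" if m: "m \<in> Hom C Y (Sh C V1)" for m
    proof -
      have "Cmp C m f = Zero C A (Sh C V1)" using ext1_zero_elem[OF E A V1] cmp_hom[OF f m] by blast
      then obtain m' where m': "m' \<in> Hom C B (Sh C V1)" and mm: "Cmp C m' g = m"
        using exact_contra[OF t m] by blast
      have "m' = Zero C B (Sh C V1)" using ext1_zero_elem[OF E B V1 m'] .
      thus ?thesis using mm g SV by simp
    qed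
    thus "Hom C Y (Sh C V1) = {Zero C Y (Sh C V1)}" using zero_hom[OF Y SV] by blast
  qed
qed

lemma S_sub_U: assumes tw: "twin_cotorsion_pair C S T U V" and S1: "S1 \<in> S" shows "S1 \<in> U"
proof -
  have cpS: "cotorsion_pair C S T" and cpU: "cotorsion_pair C U V" and E: "Ext1_zero C S V"
    using tw unfolding twin_cotorsion_pair_def by auto
  show ?thesis
    by (rule orth_char[OF cpU subcat_obj[OF cot_parts(1)[OF cpS] S1]]) (use E S1 in \<open>auto simp: Ext1_zero_def\<close>)
qed


end

lemma (in TC) ext_H: "Ext1_zero C U V \<Longrightarrow> A0 \<in> U \<Longrightarrow> \<forall>V1\<in>V. Hom C A0 (Sh C V1) = {Zero C A0 (Sh C V1)}"
  unfolding Ext1_zero_def by blast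

theorem lemma5p2:
  fixes C :: "('o, 'm) tcat"
    and S T U V :: "'o set"
    and X B Uo Z U' V0 Sm Tm :: 'o
    and x x2 x3 a a1 a3 b b1 b3 zX zX3 :: 'm
  assumes tri: "triangulated C"
    and twin: "twin_cotorsion_pair C S T U V"
    and X_minus: "X \<in> Cminus C S T U"
    and B_H: "B \<in> Hcore C S T U V"
    and x_hom: "x \<in> Hom C X B"
    and tri_x: "(X, B, Uo, x, x2, x3) \<in> Tri C" and Uo_U: "Uo \<in> U"
    \<comment> \<open>V --> U' --a--> X --> V[1]\<close>
    and tri_a: "(V0, U', X, a1, a, a3) \<in> Tri C" and U'_U: "U' \<in> U" and V0_V: "V0 \<in> V"
    \<comment> \<open>T[-1] --> S[-1] --b--> U' --> T, with Tm = T[-1], Sm = S[-1]\<close>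
    and tri_b: "(Tm, Sm, U', b1, b, b3) \<in> Tri C"
    and Sm_S: "Sh C Sm \<in> S" and Tm_T: "Sh C Tm \<in> T"
    \<comment> \<open>S[-1] --a b--> X --z_X--> Z_X --> S\<close>
    and tri_z: "(Sm, X, Z, Cmp C a b, zX, zX3) \<in> Tri C"
  shows "Z \<in> Hcore C S T U V \<and>
    (\<exists>\<zeta>. \<zeta> \<in> Hom C Z B \<and> quot_eq C (Wcore T U) X B (Cmp C \<zeta> zX) x) \<and>
    (\<forall>\<zeta>. \<zeta> \<in> Hom C Z B \<longrightarrow> quot_eq C (Wcore T U) X B (Cmp C \<zeta> zX) x \<longrightarrow>
       quot_epi C (Wcore T U) (Hcore C S T U V) Z B \<zeta>)"
proof -
  interpret TC C by (rule TC.intro[OF tri])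
  have cpS: "cotorsion_pair C S T" and cpU: "cotorsion_pair C U V" and ESV: "Ext1_zero C S V"
    using twin unfolding twin_cotorsion_pair_def by auto
  note subS = cot_parts(1)[OF cpS] and subT = cot_parts(2)[OF cpS] and EST = cot_parts(3)[OF cpS]
    and ObjS = cot_parts(4)[OF cpS]
  note subU = cot_parts(1)[OF cpU] and subV = cot_parts(2)[OF cpU] and EUV = cot_parts(3)[OF cpU]
  have a: "a \<in> Hom C U' X" and b: "b \<in> Hom C Sm U'" and zX: "zX \<in> Hom C X Z"
    using tri_homs[OF tri_a] tri_homs[OF tri_b] tri_homs[OF tri_z] by auto
  have Zo: "Z \<in> Obj C" and Xo: "X \<in> Obj C" and Smo: "Sm \<in> Obj C" using zX b hom_obj by auto
  have Bo: "B \<in> Obj C" using x_hom hom_obj by auto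
  have ShSm_U: "Sh C Sm \<in> U" using S_sub_U[OF twin Sm_S] .
  have tb2: "(U', Sh C Tm, Sh C Sm, b3, Neg C (ShM C b1), Neg C (ShM C b)) \<in> Tri C" using rot[OF rot[OF tri_b]] .
  have ShTm_W: "Sh C Tm \<in> Wcore T U" unfolding Wcore_def using ext_closed[OF cpU tb2 U'_U ShSm_U] Tm_T by blast
  obtain u v w where tZ: "(Sh C Tm, Z, Sh C V0, u, v, w) \<in> Tri C"
    using octa[OF rot[OF tri_b] rot[OF tri_a] tri_z] by blast
  have V0o: "V0 \<in> Obj C" using subcat_obj[OF subV V0_V] .
  have "Sh C V0 \<in> shift_up C V" unfolding shift_up_def iso_ob_def using V0_V V0o iso_id[OF sh_obj[OF V0o]] by blast
  hence Z_plus: "Z \<in> Cplus C T U V" unfolding Cplus_def ext_star_def using Zo ShTm_W tZ by blast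
  obtain M0 W0 p q r where M0: "M0 \<in> shift_down C S" and W0: "W0 \<in> Wcore T U"
    and tp: "(M0, X, W0, p, q, r) \<in> Tri C"
    using X_minus unfolding Cminus_def ext_star_def by blast
  have p: "p \<in> Hom C M0 X" using tri_homs[OF tp] by auto
  obtain Y' h2 h3 where tY: "(M0, Z, Y', Cmp C zX p, h2, h3) \<in> Tri C" using TR1ex[OF cmp_hom[OF p zX]] by blast
  obtain u1 v1 w1 where tY2: "(W0, Y', Sh C Sm, u1, v1, w1) \<in> Tri C"
    using octa[OF tp rot[OF tri_z] tY] by blast
  have W0U: "W0 \<in> U" and W0T: "W0 \<in> T" using W0 unfolding Wcore_def by auto
  have Y'U: "Y' \<in> U" using ext_closed[OF cpU tY2 W0U ShSm_U] .
  have Y'o: "Y' \<in> Obj C" using subcat_obj[OF subU Y'U] .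
  have "Sh C Y' \<in> ext_star C S (shift_up C T)" using ObjS sh_obj[OF Y'o] by simp
  then obtain S1 N fa ga ha where S1: "S1 \<in> S" and N: "N \<in> shift_up C T" and tS: "(S1, Sh C Y', N, fa, ga, ha) \<in> Tri C"
    unfolding ext_star_def by blast
  obtain T1 jN where T1: "T1 \<in> T" and jN: "is_iso C N (Sh C T1) jN" using N unfolding shift_up_def iso_ob_def by blast
  have T1o: "T1 \<in> Obj C" using subcat_obj[OF subT T1] .
  obtain g' h' where "(S1, Sh C Y', Sh C T1, fa, g', h') \<in> Tri C" using tri_iso3[OF tS jN] by blast
  then obtain f1 where "(T1, S1, Sh C Y', f1, fa, g') \<in> Tri C" using rot_back T1o by blast
  then obtain f2 where tT: "(Y', T1, S1, f2, f1, fa) \<in> Tri C" using rot_back Y'o by blast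
  have T1U: "T1 \<in> U" using ext_closed[OF cpU tT Y'U S_sub_U[OF twin S1]] .
  have S1o: "S1 \<in> Obj C" using subcat_obj[OF subS S1] .
  obtain Sm2 where Sm2o: "Sm2 \<in> Obj C" and iS: "iso_ob C (Sh C Sm2) S1" using ess_surj[OF S1o] by blast
  obtain i0 where "is_iso C (Sh C Sm2) S1 i0" using iS unfolding iso_ob_def by blast
  then obtain i' where i': "is_iso C S1 (Sh C Sm2) i'" using iso_inv by blast
  have Sm2S: "Sh C Sm2 \<in> S" using subcat_iso[OF subS S1] i' unfolding iso_ob_def by blast
  obtain g'' h'' where tT2: "(Y', T1, Sh C Sm2, f2, g'', h'') \<in> Tri C" using tri_iso3[OF tT i'] by blast
  have f2: "f2 \<in> Hom C Y' T1" and h2: "h2 \<in> Hom C Z Y'" using tri_homs[OF tT] tri_homs[OF tY] by auto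
  obtain E e2 e3 where tE: "(Z, T1, E, Cmp C f2 h2, e2, e3) \<in> Tri C" using TR1ex[OF cmp_hom[OF h2 f2]] by blast
  obtain u2 v2 w2 where tE2: "(Sh C M0, E, Sh C Sm2, u2, v2, w2) \<in> Tri C"
    using octa[OF rot[OF tY] tT2 tE] by blast
  have M0S: "Sh C M0 \<in> S" using M0 unfolding shift_down_def by blast
  have ES: "E \<in> S" using ext_closed[OF cpS tE2 M0S Sm2S] .
  have Eo: "E \<in> Obj C" using subcat_obj[OF subS ES] .
  obtain K where Ko: "K \<in> Obj C" and iK: "iso_ob C (Sh C K) E" using ess_surj[OF Eo] by blast
  obtain k0 where "is_iso C (Sh C K) E k0" using iK unfolding iso_ob_def by blast
  then obtain k' where k': "is_iso C E (Sh C K) k'" using iso_inv by blast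
  have KS: "Sh C K \<in> S" using subcat_iso[OF subS ES] k' unfolding iso_ob_def by blast
  obtain g3 h3' where "(Z, T1, Sh C K, Cmp C f2 h2, g3, h3') \<in> Tri C" using tri_iso3[OF tE k'] by blast
  then obtain f3 where tK: "(K, Z, T1, f3, Cmp C f2 h2, g3) \<in> Tri C" using rot_back Ko by blast
  have "K \<in> shift_down C S" unfolding shift_down_def using Ko KS by blast
  moreover have "T1 \<in> Wcore T U" unfolding Wcore_def using T1 T1U by blast
  ultimately have Z_minus: "Z \<in> Cminus C S T U" unfolding Cminus_def ext_star_def using Zo tK by blast
  have Z_H: "Z \<in> Hcore C S T U V" unfolding Hcore_def using Z_plus Z_minus by blast
  have "B \<in> Cplus C T U V" using B_H unfolding Hcore_def by blast
  then obtain W1 N1 i qB rB where W1: "W1 \<in> Wcore T U" and N1: "N1 \<in> shift_up C V"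
    and tB: "(W1, B, N1, i, qB, rB) \<in> Tri C"
    unfolding Cplus_def ext_star_def by blast
  have i: "i \<in> Hom C W1 B" and qB: "qB \<in> Hom C B N1" using tri_homs[OF tB] by auto
  have W1T: "W1 \<in> T" using W1 unfolding Wcore_def by auto
  have xa: "Cmp C x a \<in> Hom C U' B" using a x_hom by blast
  have "Cmp C qB (Cmp C x a) = Zero C U' N1" using zero_shup[OF ext_H[OF EUV U'_U] N1 cmp_hom[OF xa qB]] .
  then obtain c where c: "c \<in> Hom C U' W1" and ic: "Cmp C i c = Cmp C x a" using exact_cov[OF tB xa] by blast
  have "Hom C (Sh C Sm) (Sh C W1) = {Zero C (Sh C Sm) (Sh C W1)}" using EST Sm_S W1T unfolding Ext1_zero_def by blast
  hence cb: "Cmp C c b = Zero C Sm W1" using sh_reflect_zero cmp_hom[OF b c] by blast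
  have "Cmp C x (Cmp C a b) = Cmp C (Cmp C x a) b" using assoc[OF b a x_hom] .
  also have "\<dots> = Cmp C i (Cmp C c b)" using ic assoc[OF b c i] by simp
  also have "\<dots> = Zero C Sm B" using cb i Smo by simp
  finally obtain \<zeta>0 where z0: "\<zeta>0 \<in> Hom C Z B" and z0e: "Cmp C \<zeta>0 zX = x" using exact_contra[OF tri_z x_hom] by blast
  have W0o: "W0 \<in> Obj C" using subcat_obj[OF subU W0U] .
  have "Add C x (Neg C x) = Cmp C (Zero C W0 B) (Zero C X W0)" using add_neg[OF x_hom] cmp_zero_r[OF zero_hom[OF W0o Bo] Xo] by simp
  hence "quot_eq C (Wcore T U) X B (Cmp C \<zeta>0 zX) x"
    unfolding quot_eq_def factors_through_def using z0e x_hom W0 Xo Bo W0o by blast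
  hence ex: "\<exists>\<zeta>. \<zeta> \<in> Hom C Z B \<and> quot_eq C (Wcore T U) X B (Cmp C \<zeta> zX) x" using z0 by blast
  have epi: "quot_epi C (Wcore T U) (Hcore C S T U V) Z B \<zeta>"
    if zh: "\<zeta> \<in> Hom C Z B" and qe: "quot_eq C (Wcore T U) X B (Cmp C \<zeta> zX) x" for \<zeta>
  proof -
    obtain W2 u0 v0 where W2: "W2 \<in> Wcore T U" and u0: "u0 \<in> Hom C X W2" and v0: "v0 \<in> Hom C W2 B"
      and e0: "Add C (Cmp C \<zeta> zX) (Neg C x) = Cmp C v0 u0"
      using qe unfolding quot_eq_def factors_through_def by blast
    have "quot_eq C (Wcore T U) B D g h"
      if D: "D \<in> Hcore C S T U V" and g: "g \<in> Hom C B D" and h: "h \<in> Hom C B D"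
        and qz: "quot_eq C (Wcore T U) Z D (Cmp C g \<zeta>) (Cmp C h \<zeta>)" for D g h
    proof -
      obtain W3 u1 v1 where W3: "W3 \<in> Wcore T U" and u1: "u1 \<in> Hom C Z W3" and v1: "v1 \<in> Hom C W3 D"
        and e1: "Add C (Cmp C g \<zeta>) (Neg C (Cmp C h \<zeta>)) = Cmp C v1 u1"
        using qz unfolding quot_eq_def factors_through_def by blast
      have "D \<in> Cplus C T U V" using D unfolding Hcore_def by blast
      then obtain W4 N4 i4 q4 r4 where W4: "W4 \<in> Wcore T U" and N4: "N4 \<in> shift_up C V"
        and tD: "(W4, D, N4, i4, q4, r4) \<in> Tri C"
        unfolding Cplus_def ext_star_def by blast
      have i4: "i4 \<in> Hom C W4 D" and q4: "q4 \<in> Hom C D N4" using tri_homs[OF tD] by auto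
      define k where "k = Add C g (Neg C h)"
      have k: "k \<in> Hom C B D" unfolding k_def using g h by blast
      have "Cmp C k \<zeta> = Add C (Cmp C g \<zeta>) (Cmp C (Neg C h) \<zeta>)" unfolding k_def using distr[OF g neg_hom[OF h] zh] .
      hence kz: "Cmp C k \<zeta> = Cmp C v1 u1" using neg_cmp[OF h zh] e1 by simp
      have W3U: "W3 \<in> U" and W2U: "W2 \<in> U" using W3 W2 unfolding Wcore_def by auto
      have qv1: "Cmp C q4 v1 = Zero C W3 N4" using zero_shup[OF ext_H[OF EUV W3U] N4 cmp_hom[OF v1 q4]] .
      define A where "A = Cmp C q4 k"
      have A: "A \<in> Hom C B N4" unfolding A_def using k q4 by blast
      have N4o: "N4 \<in> Obj C" using q4 hom_obj by blast
      have "Cmp C A \<zeta> = Cmp C q4 (Cmp C k \<zeta>)" unfolding A_def using assoc[OF zh k q4] by simp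
      also have "\<dots> = Cmp C (Cmp C q4 v1) u1" using kz assoc[OF u1 v1 q4] by simp
      also have "\<dots> = Zero C Z N4" using qv1 u1 N4o by simp
      finally have Az: "Cmp C A \<zeta> = Zero C Z N4" .
      have Azx: "Cmp C A (Cmp C \<zeta> zX) = Zero C X N4" using assoc[OF zX zh A] Az zX N4o by simp
      have Av0: "Cmp C A v0 = Zero C W2 N4" using zero_shup[OF ext_H[OF EUV W2U] N4 cmp_hom[OF v0 A]] .
      have zzx: "Cmp C \<zeta> zX \<in> Hom C X B" using zX zh by blast
      have "Cmp C A (Add C (Cmp C \<zeta> zX) (Neg C x)) = Cmp C (Cmp C A v0) u0" using e0 assoc[OF u0 v0 A] by simp
      also have "\<dots> = Zero C X N4" using Av0 u0 N4o by simp
      finally have "Cmp C A (Add C (Cmp C \<zeta> zX) (Neg C x)) = Zero C X N4" .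
      moreover have "Cmp C A (Add C (Cmp C \<zeta> zX) (Neg C x)) = Neg C (Cmp C A x)"
        using distl[OF zzx neg_hom[OF x_hom] A] Azx cmp_neg[OF x_hom A] zero_add neg_hom cmp_hom[OF x_hom A] by simp
      ultimately have "Cmp C A x = Zero C X N4" using neg_eq_zero cmp_hom[OF x_hom A] by simp
      then obtain r0 where r0: "r0 \<in> Hom C Uo N4" and r0e: "Cmp C r0 x2 = A" using exact_contra[OF tri_x A] by blast
      have x2: "x2 \<in> Hom C B Uo" using tri_homs[OF tri_x] by auto
      have "r0 = Zero C Uo N4" using zero_shup[OF ext_H[OF EUV Uo_U] N4 r0] .
      hence "Cmp C q4 k = Zero C B N4" using r0e x2 N4o unfolding A_def by simp
      then obtain k' where k': "k' \<in> Hom C B W4" and ik: "Cmp C i4 k' = k" using exact_cov[OF tD k] by blast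
      show ?thesis unfolding quot_eq_def factors_through_def using g h W4 k' i4 ik[symmetric] unfolding k_def by blast
    qed
    thus ?thesis unfolding quot_epi_def using Z_H B_H zh by blast
  qed
  show ?thesis using Z_H ex epi by blast
qed


end
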